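(* Let $\rho_1\in(0,1)$, $\rho_2\in(0,1-\rho_1)$ and $\eta\sim\mu^{\rho_1,\rho_2}$ constructed from $(a(i))$, $(s(i))$ as in the context. Then for any $x\in\mathbb{Z}$, \[ h^{\rho_1}(x,0)=\hat h^{\rho_1}(x,0)+\sup_{j\ge0}\{h^{\rho_1+\rho_2}(j,0)-\hat h^{\rho_1}(j,0)\}-\sup_{j\ge x}\{h^{\rho_1+\rho_2}(j,0)-h^{\rho_1+\rho_2}(x,0)-(\hat h^{\rho_1}(j,0)-\hat h^{\rho_1}(x,0))\}. \]
   Context: Queueing construction: $(a(i))_{i\in\mathbb{Z}}$, $(s(i))_{i\in\mathbb{Z}}$ independent families of i.i.d. Bernoulli variables with parameters $\rho_1$, $\rho_1+\rho_2$; $\mathcal{A}_{[i,j]}=\sum_{k=i}^ja(k)$, $\mathcal{S}_{[i,j]}=\sum_{k=i}^js(k)$ (empty sums $0$); $Q_i=\sup_{j\ge i-1}(\mathcal{A}_{[i,j]}-\mathcal{S}_{[i,j]})$; $d(i)=1$ iff $s(i)=1$ and ($a(i)=1$ or $Q_{i+1}\ge1$). The configuration $\eta$ has $\eta(i)=1$ if $d(i)=1$, $\eta(i)=2$ if $s(i)=1,d(i)=0$, $\eta(i)=+\infty$ otherwise; its law is $\mu^{\rho_1,\rho_2}$. For a $\{0,1\}$-valued configuration $\zeta$ define its height profile $g(0)=0$, $g(x)=\sum_{i=1}^x(1-2\zeta(i))$ for $x\ge1$, $g(x)=-\sum_{i=x+1}^0(1-2\zeta(i))$ for $x\le-1$.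 Then $h^{\rho_1}(\cdot,0)$, $h^{\rho_1+\rho_2}(\cdot,0)$, $\hat h^{\rho_1}(\cdot,0)$ are the height profiles of $\zeta=d$, $\zeta=s$, $\zeta=a$ respectively. *)

theory Defs
  imports "HOL-Probability.Probability"
begin

text \<open>Deterministic part of the queueing construction. Bernoulli variables are
  represented as booleans (True = 1).\<close>

definition cnt :: "(int \<Rightarrow> bool) \<Rightarrow> int \<Rightarrow> int \<Rightarrow> int" where
  "cnt b i j = (\<Sum>k\<in>{i..j}. of_bool (b k))"   (* empty sum 0 if j < i *)

definition Qlen :: "(int \<Rightarrow> bool) \<Rightarrow> (int \<Rightarrow> bool) \<Rightarrow> int \<Rightarrow> ereal" where
  "Qlen a s i = (SUP j\<in>{i - 1..}. ereal (of_int (cnt a i j - cnt s i j)))"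

definition dep :: "(int \<Rightarrow> bool) \<Rightarrow> (int \<Rightarrow> bool) \<Rightarrow> int \<Rightarrow> bool" where
  "dep a s i \<longleftrightarrow> s i \<and> (a i \<or> Qlen a s (i + 1) \<ge> 1)"

definition height :: "(int \<Rightarrow> bool) \<Rightarrow> int \<Rightarrow> int" where
  "height z x = (if x \<ge> 0 then (\<Sum>i\<in>{1..x}. 1 - 2 * of_bool (z i))
                 else - (\<Sum>i\<in>{x+1..0}. 1 - 2 * of_bool (z i)))"

end

theory Submission
  imports Defs
begin

lemma cnt_split:
  assumes "i - 1 \<le> k" "k \<le> j"
  shows "cnt b i j = cnt b i k + cnt b (k+1) j"
proof -
  have "{i..j} = {i..k} \<union> {k+1..j}" using assms by auto
  moreover have "{i..k} \<inter> {k+1..j} = {}" by auto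
  ultimately show ?thesis unfolding cnt_def \<open>{i..j} = _\<close> by (intro sum.union_disjoint) auto
qed

lemma cnt_empty: "j < i \<Longrightarrow> cnt b i j = 0"
  by (simp add: cnt_def)

lemma cnt_single: "cnt b i i = of_bool (b i)"
  by (simp add: cnt_def)

lemma cnt_nonneg: "0 \<le> cnt b i j"
  unfolding cnt_def by (rule sum_nonneg) auto

lemma cnt_le: "i - 1 \<le> j \<Longrightarrow> cnt b i j \<le> j - i + 1"
proof -
  assume h: "i - 1 \<le> j"
  have "cnt b i j \<le> (\<Sum>k\<in>{i..j}. 1)" unfolding cnt_def by (rule sum_mono) auto
  also have "\<dots> = j - i + 1" using h by simp
  finally show ?thesis .
qed

definition Dd :: "(int \<Rightarrow> bool) \<Rightarrow> (int \<Rightarrow> bool) \<Rightarrow> int \<Rightarrow> int \<Rightarrow> int" where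
  "Dd A S i j = cnt A i j - cnt S i j"

lemma Dd_bound:
  assumes B: "\<forall>j\<ge>0. Dd A S 1 j \<le> B" and j: "i - 1 \<le> j"
  shows "Dd A S i j \<le> B + \<bar>i - 1\<bar>"
proof -
  have B0: "0 \<le> B" using B[rule_format, of 0] by (simp add: Dd_def cnt_empty)
  show ?thesis
  proof (cases "i \<le> 1")
    case True
    show ?thesis
    proof (cases "j < 0")
      case True
      have "Dd A S i j \<le> j - i + 1" unfolding Dd_def
        using cnt_le[OF j, of A] cnt_nonneg[of S i j] by linarith
      then show ?thesis using True B0 by linarith
    next
      case False
      have "Dd A S i j = Dd A S i 0 + Dd A S 1 j"
        unfolding Dd_def using cnt_split[of i 0 j] \<open>i \<le> 1\<close> False by force
      moreover have "Dd A S i 0 \<le> 1 - i" unfolding Dd_def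
        using cnt_le[of i 0 A] cnt_nonneg[of S i 0] \<open>i \<le> 1\<close> by linarith
      moreover have "Dd A S 1 j \<le> B" using B False by simp
      ultimately show ?thesis using \<open>i \<le> 1\<close> by linarith
    qed
  next
    case False
    have "Dd A S 1 j = Dd A S 1 (i-1) + Dd A S i j"
      unfolding Dd_def using cnt_split[of 1 "i-1" j] False j by force
    moreover have "- Dd A S 1 (i-1) \<le> i - 1" unfolding Dd_def
      using cnt_le[of 1 "i-1" S] cnt_nonneg[of A 1 "i-1"] False by linarith
    moreover have "Dd A S 1 j \<le> B" using B False j by simp
    ultimately show ?thesis using False by linarith
  qed
qed

lemma exists_max:
  fixes f :: "int \<Rightarrow> int"
  assumes "\<forall>j\<ge>k. f j \<le> C"
  shows "\<exists>j0\<ge>k. \<forall>j\<ge>k. f j \<le> f j0"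
proof -
  obtain j0 where j0: "j0 \<ge> k" "\<forall>y. y \<ge> k \<longrightarrow> nat (C - f j0) \<le> nat (C - f y)"
    using ex_has_least_nat[of "\<lambda>j. j \<ge> k" k "\<lambda>j. nat (C - f j)"] by auto
  have "\<forall>j\<ge>k. f j \<le> f j0"
  proof (intro allI impI)
    fix j assume "k \<le> j"
    then have "nat (C - f j0) \<le> nat (C - f j)" using j0 by auto
    moreover have "f j \<le> C" "f j0 \<le> C" using assms \<open>k \<le> j\<close> j0 by auto
    ultimately show "f j \<le> f j0" by linarith
  qed
  then show ?thesis using j0 by auto
qed

definition qv :: "(int \<Rightarrow> bool) \<Rightarrow> (int \<Rightarrow> bool) \<Rightarrow> int \<Rightarrow> int" where
  "qv A S i = Dd A S i (SOME j. j \<ge> i - 1 \<and> (\<forall>j'\<ge>i - 1. Dd A S i j' \<le> Dd A S i j))"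

lemma qv_prop:
  assumes B: "\<forall>j\<ge>0. Dd A S 1 j \<le> B"
  shows "(\<forall>j\<ge>i-1. Dd A S i j \<le> qv A S i) \<and> (\<exists>j\<ge>i-1. Dd A S i j = qv A S i)"
proof -
  have "\<exists>j0\<ge>i-1. \<forall>j\<ge>i-1. Dd A S i j \<le> Dd A S i j0"
    by (rule exists_max[where C = "B + \<bar>i - 1\<bar>"]) (use Dd_bound[OF B] in auto)
  then have "(SOME j. j \<ge> i - 1 \<and> (\<forall>j'\<ge>i - 1. Dd A S i j' \<le> Dd A S i j)) \<ge> i - 1 \<and>
     (\<forall>j'\<ge>i - 1. Dd A S i j' \<le> Dd A S i (SOME j. j \<ge> i - 1 \<and> (\<forall>j'\<ge>i - 1. Dd A S i j' \<le> Dd A S i j)))"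
    by (rule someI_ex)
  then show ?thesis unfolding qv_def by blast
qed

lemma SUP_attained:
  fixes f :: "'a \<Rightarrow> 'b::complete_lattice"
  assumes "j0 \<in> J" "f j0 = c" "\<And>j. j \<in> J \<Longrightarrow> f j \<le> c"
  shows "(SUP j\<in>J. f j) = c"
  by (metis assms SUP_upper SUP_least antisym)

lemma Qlen_qv:
  assumes B: "\<forall>j\<ge>0. Dd A S 1 j \<le> B"
  shows "Qlen A S i = ereal (of_int (qv A S i))"
proof -
  obtain j0 where "j0 \<ge> i - 1" "Dd A S i j0 = qv A S i" using qv_prop[OF B, of i] by blast
  show ?thesis unfolding Qlen_def
    apply (rule SUP_attained[of j0])
    using \<open>j0 \<ge> i - 1\<close> \<open>Dd A S i j0 = qv A S i\<close> qv_prop[OF B, of i] by (auto simp: Dd_def)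
qed

lemma Dd_step:
  assumes "j \<ge> i"
  shows "Dd A S i j = (of_bool (A i) - of_bool (S i)) + Dd A S (i+1) j"
  unfolding Dd_def using cnt_split[of i i j] assms cnt_single by force

lemma qv_rec:
  assumes B: "\<forall>j\<ge>0. Dd A S 1 j \<le> B"
  shows "qv A S i = max 0 ((of_bool (A i) - of_bool (S i)) + qv A S (i+1))"
proof -
  let ?c = "of_bool (A i) - of_bool (S i) :: int"
  note P1 = qv_prop[OF B, of i] and P2 = qv_prop[OF B, of "i+1"]
  have le: "qv A S i \<le> max 0 (?c + qv A S (i+1))"
  proof -
    obtain j where j: "j \<ge> i - 1" "Dd A S i j = qv A S i" using P1 by blast
    show ?thesis
    proof (cases "j = i - 1")
      case True then show ?thesis using j by (simp add: Dd_def cnt_empty)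
    next
      case False
      then have "j \<ge> i" using j by simp
      then show ?thesis using j Dd_step[of i j A S] P2 by force
    qed
  qed
  have "0 \<le> qv A S i" using P1 by (force simp: Dd_def cnt_empty)
  moreover have "?c + qv A S (i+1) \<le> qv A S i"
  proof -
    obtain j where j: "j \<ge> i" "Dd A S (i+1) j = qv A S (i+1)" using P2 by auto
    have "Dd A S i j \<le> qv A S i" using P1 j(1) by auto
    then show ?thesis using Dd_step[of i j A S] j by linarith
  qed
  ultimately show ?thesis using le by linarith
qed

lemma dep_qv:
  assumes B: "\<forall>j\<ge>0. Dd A S 1 j \<le> B"
  shows "of_bool (A i) - of_bool (dep A S i) = qv A S i - qv A S (i+1)"
proof -
  have d: "dep A S i \<longleftrightarrow> S i \<and> (A i \<or> qv A S (i+1) \<ge> 1)"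
    unfolding dep_def Qlen_qv[OF B] by (simp add: one_ereal_def)
  have "0 \<le> qv A S (i+1)" using qv_prop[OF B, of "i+1"] by (force simp: Dd_def cnt_empty)
  then show ?thesis using qv_rec[OF B, of i] d by (cases "A i"; cases "S i"; auto)
qed

lemma height_step: "height z (x+1) = height z x + (1 - 2 * of_bool (z (x+1)))"
proof -
  consider "x \<ge> 0" | "x = -1" | "x \<le> -2" by linarith
  then show ?thesis
  proof cases
    case 1
    have "{1..x+1} = insert (x+1) {1..x}" using 1 by auto
    then show ?thesis using 1 by (simp add: height_def)
  next
    case 2 then show ?thesis by (simp add: height_def)
  next
    case 3
    have "{x+1..0} = insert (x+1) {x+2..0}" using 3 by auto
    then show ?thesis using 3 by (simp add: height_def add.commute)
  qed
qed

lemma height0: "height z 0 = 0" by (simp add: height_def)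

lemma height_diff:
  assumes "x \<le> j"
  shows "height S j - height S x - (height A j - height A x) = 2 * Dd A S (x+1) j"
  using assms
proof (induction j rule: int_ge_induct)
  case base then show ?case by (simp add: Dd_def cnt_empty)
next
  case (step j)
  have "Dd A S (x+1) (j+1) = Dd A S (x+1) j + (of_bool (A (j+1)) - of_bool (S (j+1)))"
    unfolding Dd_def using cnt_split[of "x+1" j "j+1"] step(1) cnt_single by force
  then show ?case using step height_step[of S j] height_step[of A j] by simp
qed

lemma height_main:
  assumes B: "\<forall>j\<ge>0. Dd A S 1 j \<le> B"
  shows "height (dep A S) x - height A x = 2 * (qv A S 1 - qv A S (x+1))"
proof (induction x rule: int_induct[where k=0])
  case base then show ?case by (simp add: height0)
next
  case (step1 i)
  then show ?case using height_step[of "dep A S" i] height_step[of A i] dep_qv[OF B, of "i+1"]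
    by (simp add: algebra_simps)
next
  case (step2 i)
  then show ?case using height_step[of "dep A S" "i-1"] height_step[of A "i-1"] dep_qv[OF B, of i]
    by (simp add: algebra_simps)
qed

lemma deterministic:
  assumes B: "\<forall>j\<ge>0. Dd A S 1 j \<le> B"
  shows "(let h1 = height (dep A S); h2 = height S; hh = height A
     in (SUP j\<in>{0..}. ereal (of_int (h2 j - hh j))) < \<infinity>
      \<and> ereal (of_int (h1 x)) =
          ereal (of_int (hh x))
          + (SUP j\<in>{0..}. ereal (of_int (h2 j - hh j)))
          - (SUP j\<in>{x..}. ereal (of_int (h2 j - h2 x - (hh j - hh x)))))"
proof -
  have e1: "(SUP j\<in>{0..}. ereal (of_int (height S j - height A j))) = ereal (of_int (2 * qv A S 1))"
  proof -
    obtain j0 where "j0 \<ge> 0" "Dd A S 1 j0 = qv A S 1" using qv_prop[OF B, of 1] by auto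
    show ?thesis
      apply (rule SUP_attained[of j0])
      using \<open>j0 \<ge> 0\<close> \<open>Dd A S 1 j0 = qv A S 1\<close> qv_prop[OF B, of 1] height_diff[of 0 _ S A]
      by (auto simp: height0)
  qed
  have e2: "(SUP j\<in>{x..}. ereal (of_int (height S j - height S x - (height A j - height A x))))
     = ereal (of_int (2 * qv A S (x+1)))"
  proof -
    obtain j0 where "j0 \<ge> x" "Dd A S (x+1) j0 = qv A S (x+1)" using qv_prop[OF B, of "x+1"] by auto
    show ?thesis
      apply (rule SUP_attained[of j0])
      using \<open>j0 \<ge> x\<close> \<open>Dd A S (x+1) j0 = qv A S (x+1)\<close> qv_prop[OF B, of "x+1"] height_diff[of x _ S A]
      by auto
  qed
  have "height (dep A S) x = height A x + 2 * qv A S 1 - 2 * qv A S (x+1)"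
    using height_main[OF B, of x] by simp
  then show ?thesis unfolding Let_def e1 e2 by simp
qed

theorem lemma5p3:
  fixes M :: "'w measure" and a s :: "int \<Rightarrow> 'w \<Rightarrow> bool" and \<rho>1 \<rho>2 :: real
  assumes "prob_space M"
    and "0 < \<rho>1" "\<rho>1 < 1" "0 < \<rho>2" "\<rho>2 < 1 - \<rho>1"
    and "prob_space.indep_vars M (\<lambda>_. count_space UNIV)
           (\<lambda>k. case k of Inl i \<Rightarrow> a i | Inr i \<Rightarrow> s i) (UNIV :: (int + int) set)"
    and "\<And>i. measure M {\<omega> \<in> space M. a i \<omega>} = \<rho>1"
    and "\<And>i. measure M {\<omega> \<in> space M. s i \<omega>} = \<rho>1 + \<rho>2"
  shows "AE \<omega> in M. \<forall>x::int.
    (let A = (\<lambda>i. a i \<omega>); S = (\<lambda>i. s i \<omega>);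
         h1 = height (dep A S); h2 = height S; hh = height A
     in (SUP j\<in>{0..}. ereal (of_int (h2 j - hh j))) < \<infinity>
      \<and> ereal (of_int (h1 x)) =
          ereal (of_int (hh x))
          + (SUP j\<in>{0..}. ereal (of_int (h2 j - hh j)))
          - (SUP j\<in>{x..}. ereal (of_int (h2 j - h2 x - (hh j - hh x)))))"
proof -
  interpret prob_space M by fact
  define F where "F = (\<lambda>k. case k of Inl i \<Rightarrow> a i | Inr i \<Rightarrow> s i)"
  define Y :: "int + int \<Rightarrow> bool \<Rightarrow> real" where
    "Y = (\<lambda>k b. case k of Inl _ \<Rightarrow> of_bool b | Inr _ \<Rightarrow> - of_bool b)"
  define X where "X = (\<lambda>k \<omega>. Y k (F k \<omega>))"
  have indX: "indep_vars (\<lambda>_. borel) X UNIV"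
    unfolding X_def
    by (rule indep_vars_compose2[where M'="\<lambda>_. count_space UNIV"]) (use assms(6) in \<open>auto simp: F_def\<close>)
  have Xm[measurable]: "X k \<in> borel_measurable M" for k
    using indX unfolding indep_vars_def by blast
  define I where "I = (\<lambda>n::nat. Inl ` {1..int n} \<union> Inr ` {1..int n} :: (int + int) set)"
  have finI: "finite (I n)" for n unfolding I_def by auto
  have sumX: "(\<Sum>k\<in>I n. X k \<omega>) = real_of_int (Dd (\<lambda>i. a i \<omega>) (\<lambda>i. s i \<omega>) 1 (int n))" for n \<omega>
  proof -
    have "(\<Sum>k\<in>I n. X k \<omega>) = (\<Sum>k\<in>Inl ` {1..int n}. X k \<omega>) + (\<Sum>k\<in>Inr ` {1..int n}. X k \<omega>)"
      unfolding I_def by (rule sum.union_disjoint) auto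
    also have "\<dots> = (\<Sum>i\<in>{1..int n}. X (Inl i) \<omega>) + (\<Sum>i\<in>{1..int n}. X (Inr i) \<omega>)"
      by (simp add: sum.reindex)
    also have "\<dots> = real_of_int (Dd (\<lambda>i. a i \<omega>) (\<lambda>i. s i \<omega>) 1 (int n))"
      by (simp add: X_def Y_def F_def Dd_def cnt_def sum_negf)
    finally show ?thesis .
  qed
  have expA: "expectation (X (Inl i)) = \<rho>1" for i
  proof -
    have "X (Inl i) = indicator {\<omega>. a i \<omega>}"
      by (auto simp: X_def Y_def F_def indicator_def fun_eq_iff)
    moreover have "{\<omega>. a i \<omega>} \<inter> space M = {\<omega> \<in> space M. a i \<omega>}" by auto
    ultimately show ?thesis using assms(7)[of i] by simp
  qed
  have expS: "expectation (X (Inr i)) = - (\<rho>1 + \<rho>2)" for i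
  proof -
    have "X (Inr i) = (\<lambda>\<omega>. - indicator {\<omega>. s i \<omega>} \<omega>)"
      by (auto simp: X_def Y_def F_def indicator_def fun_eq_iff)
    moreover have "{\<omega>. s i \<omega>} \<inter> space M = {\<omega> \<in> space M. s i \<omega>}" by auto
    ultimately show ?thesis using assms(8)[of i] by simp
  qed
  define Aev where "Aev = (\<lambda>n. {\<omega> \<in> space M. 0 \<le> (\<Sum>k\<in>I n. X k \<omega>)})"
  have Aev_sets[measurable]: "Aev n \<in> sets M" for n
    unfolding Aev_def by measurable
  have bound: "measure M (Aev n) \<le> exp (- (\<rho>2\<^sup>2)) ^ n" for n
  proof (cases "n = 0")
    case True then show ?thesis by simp
  next
    case False
    define lo :: "int + int \<Rightarrow> real" where "lo = (\<lambda>k. case k of Inl _ \<Rightarrow> 0 | Inr _ \<Rightarrow> -1)"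
    define hi :: "int + int \<Rightarrow> real" where "hi = (\<lambda>k. case k of Inl _ \<Rightarrow> 1 | Inr _ \<Rightarrow> 0)"
    have muval: "- (real n * \<rho>2) = (\<Sum>k\<in>I n. expectation (X k))"
    proof -
      have "(\<Sum>k\<in>I n. expectation (X k)) = (\<Sum>k\<in>Inl ` {1..int n}. expectation (X k)) + (\<Sum>k\<in>Inr ` {1..int n}. expectation (X k))"
        unfolding I_def by (rule sum.union_disjoint) auto
      also have "\<dots> = real n * \<rho>1 - real n * (\<rho>1 + \<rho>2)"
        by (simp add: sum.reindex expA expS algebra_simps)
      finally show ?thesis by (simp add: algebra_simps)
    qed
    interpret H: Hoeffding_ineq M "I n" X lo hi "- (real n * \<rho>2)"
    proof unfold_locales
      show "finite (I n)" by (rule finI)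
      show "indep_vars (\<lambda>_. borel) X (I n)" using indX by (rule indep_vars_subset) auto
      show "AE x in M. X i x \<in> {lo i..hi i}" if "i \<in> I n" for i
        by (rule AE_I2) (auto simp: X_def Y_def lo_def hi_def split: sum.splits)
      show "- (real n * \<rho>2) \<equiv> (\<Sum>i\<in>I n. expectation (X i))" using muval by simp
    qed
    have cardI: "card (I n) = 2 * n"
    proof -
      have "card (I n) = card (Inl ` {1..int n} :: (int+int) set) + card (Inr ` {1..int n} :: (int+int) set)"
        unfolding I_def by (rule card_Un_disjoint) auto
      also have "\<dots> = 2 * n" by (simp add: card_image)
      finally show ?thesis .
    qed
    have sq: "(\<Sum>i\<in>I n. (hi i - lo i)\<^sup>2) = real (2 * n)"
    proof -
      have "(\<Sum>i\<in>I n. (hi i - lo i)\<^sup>2) = (\<Sum>i\<in>I n. 1)"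
        by (rule sum.cong) (auto simp: hi_def lo_def split: sum.splits)
      then show ?thesis using cardI by simp
    qed
    have "measure M {x\<in>space M. (\<Sum>i\<in>I n. X i x) \<ge> - (real n * \<rho>2) + real n * \<rho>2}
       \<le> exp (-2 * (real n * \<rho>2)\<^sup>2 / (\<Sum>i\<in>I n. (hi i - lo i)\<^sup>2))"
      by (rule H.Hoeffding_ineq_ge) (use assms(4) False sq in auto)
    also have "-2 * (real n * \<rho>2)\<^sup>2 / (\<Sum>i\<in>I n. (hi i - lo i)\<^sup>2) = real n * (- (\<rho>2\<^sup>2))"
      using False unfolding sq by (simp add: power2_eq_square field_simps)
    also have "exp \<dots> = exp (- (\<rho>2\<^sup>2)) ^ n" by (rule exp_of_nat_mult)
    finally show ?thesis unfolding Aev_def by simp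
  qed
  have summ: "summable (\<lambda>n. measure M (Aev n))"
  proof (rule summable_comparison_test')
    show "summable (\<lambda>n. exp (- (\<rho>2\<^sup>2)) ^ n)"
      by (rule summable_geometric) (use assms(4) in simp)
    show "norm (measure M (Aev n)) \<le> exp (- (\<rho>2\<^sup>2)) ^ n" for n using bound[of n] by simp
  qed
  have BC: "AE \<omega> in M. eventually (\<lambda>n. \<omega> \<in> space M - Aev n) sequentially"
    by (rule borel_cantelli_AE1) (use summ in \<open>auto simp: emeasure_eq_measure\<close>)
  have "AE \<omega> in M. \<omega> \<in> space M \<and> eventually (\<lambda>n. \<omega> \<in> space M - Aev n) sequentially"
    using BC AE_space by eventually_elim auto
  then show ?thesis
  proof (rule eventually_mono)
    fix \<omega> assume h: "\<omega> \<in> space M \<and> eventually (\<lambda>n. \<omega> \<in> space M - Aev n) sequentially"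
    then obtain N where N: "\<And>n. n \<ge> N \<Longrightarrow> \<omega> \<notin> Aev n" unfolding eventually_sequentially by blast
    let ?A = "\<lambda>i. a i \<omega>" and ?S = "\<lambda>i. s i \<omega>"
    have B: "\<forall>j\<ge>0. Dd ?A ?S 1 j \<le> int N"
    proof (intro allI impI)
      fix j :: int assume "0 \<le> j"
      then obtain n where n: "j = int n" by (metis nonneg_eq_int)
      show "Dd ?A ?S 1 j \<le> int N"
      proof (cases "n \<ge> N")
        case True
        then have "\<omega> \<notin> Aev n" by (rule N)
        then have "\<not> 0 \<le> real_of_int (Dd ?A ?S 1 (int n))" using h unfolding Aev_def sumX by auto
        then show ?thesis using n by simp
      next
        case False
        have "Dd ?A ?S 1 j \<le> j" unfolding Dd_def using cnt_le[of 1 j ?A] cnt_nonneg[of ?S 1 j] \<open>0 \<le> j\<close> by simp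
        then show ?thesis using n False by simp
      qed
    qed
    show "\<forall>x::int.
    (let A = ?A; S = ?S;
         h1 = height (dep A S); h2 = height S; hh = height A
     in (SUP j\<in>{0..}. ereal (of_int (h2 j - hh j))) < \<infinity>
      \<and> ereal (of_int (h1 x)) =
          ereal (of_int (hh x))
          + (SUP j\<in>{0..}. ereal (of_int (h2 j - hh j)))
          - (SUP j\<in>{x..}. ereal (of_int (h2 j - h2 x - (hh j - hh x)))))"
      unfolding Let_def using deterministic[OF B, unfolded Let_def] by blast
  qed
qed

end
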